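(* Let $m\ge 2$ and $\beta=0$. A real number $\lambda$ is a principal eigenvalue of $\Delta_0$ (with homogeneous Dirichlet boundary condition) if and only if $\lambda\in(0,1]$. Moreover, for every $\lambda\in(0,1]$ the function $u(x)=(1-\lambda)^{|x|}$ (with the convention $0^0=1$) is an eigenfunction associated with $\lambda$.
   Context: Tree: for an integer $m\ge2$, the regular $m$-branching tree $\mathbb{T}_m$ has as vertices the root $\emptyset$ and all finite sequences $(\emptyset,a_1,\dots,a_k)$, $k\in\mathbb{N}$, $a_i\in\{0,\dots,m-1\}$. The level of $x=(\emptyset,a_1,\dots,a_k)$ is $|x|=k$ ($|\emptyset|=0$). The successors of $x$ are $(x,i)$, $i\in\{0,\dots,m-1\}$; for $x\ne\emptyset$, $\hat x$ denotes its unique immediate predecessor. A branch is an infinite sequence $(x_n)_{n\ge0}$ with $x_0=\emptyset$ and $x_{n+1}$ a successor of $x_n$; $\partial\mathbb{T}_m$ is the set of branches. For $y=(x_n)\in\partial\mathbb{T}_m$, $\lim_{x\to y}u(x)=L$ means $\lim_{n\to\infty}u(x_n)=L$ (similarly for $\liminf$, $\limsup$). Operator: for $\beta\in[0,1)$ let $p_\beta=1$ if $\beta=0$ and $p_\beta=\beta/(1-\beta)$ if $\beta\in(0,1)$. For $u:\mathbb{T}_m\to\mathbb{R}$, $\Delta_\beta u(\emptyset)=\frac1m\sum_{i=0}^{m-1}u(\emptyset,i)-u(\emptyset)$ and, for $x\ne\emptyset$, $\Delta_\beta u(x)=\big(\beta u(\hat x)+\frac{1-\beta}{m}\sum_{i=0}^{m-1}u(x,i)-u(x)\big)p_\beta^{-|x|}$.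 Eigenvalues: $\lambda\in\mathbb{R}$ is an eigenvalue of $\Delta_\beta$ if there is a bounded $u:\mathbb{T}_m\to\mathbb{R}$, $u\not\equiv0$, with $-\Delta_\beta u=\lambda u$ on $\mathbb{T}_m$ and $\lim_{x\to y}u(x)=0$ for every $y\in\partial\mathbb{T}_m$ ($u$ is an eigenfunction). An eigenvalue $\lambda>0$ is principal if it has a non-negative eigenfunction. *)

theory Defs
  imports Complex_Main
begin

text \<open>Vertices of the regular m-branching tree: finite lists of digits < m;
  the root is the empty list, the level is the length, the successors of x
  are x @ [i], the immediate predecessor of x is butlast x.\<close>

definition tree :: "nat \<Rightarrow> nat list set" where
  "tree m = {xs. \<forall>a\<in>set xs. a < m}"

definition p_beta :: "real \<Rightarrow> real" where
  "p_beta \<beta> = (if \<beta> = 0 then 1 else \<beta> / (1 - \<beta>))"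

definition Delta :: "nat \<Rightarrow> real \<Rightarrow> (nat list \<Rightarrow> real) \<Rightarrow> nat list \<Rightarrow> real" where
  "Delta m \<beta> u x =
     (if x = [] then (1 / real m) * (\<Sum>i<m. u (x @ [i])) - u x
      else (\<beta> * u (butlast x) + ((1 - \<beta>) / real m) * (\<Sum>i<m. u (x @ [i])) - u x)
           / (p_beta \<beta>) ^ length x)"

definition branch :: "nat \<Rightarrow> (nat \<Rightarrow> nat list) \<Rightarrow> bool" where
  "branch m X \<longleftrightarrow> X 0 = [] \<and> (\<forall>n. \<exists>i<m. X (Suc n) = X n @ [i])"

definition eigenfunction :: "nat \<Rightarrow> real \<Rightarrow> real \<Rightarrow> (nat list \<Rightarrow> real) \<Rightarrow> bool" where
  "eigenfunction m \<beta> lam u \<longleftrightarrow>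
     (\<exists>C. \<forall>x\<in>tree m. \<bar>u x\<bar> \<le> C) \<and>
     (\<exists>x\<in>tree m. u x \<noteq> 0) \<and>
     (\<forall>x\<in>tree m. - Delta m \<beta> u x = lam * u x) \<and>
     (\<forall>X. branch m X \<longrightarrow> (\<lambda>n. u (X n)) \<longlonglongrightarrow> 0)"

definition eigenvalue :: "nat \<Rightarrow> real \<Rightarrow> real \<Rightarrow> bool" where
  "eigenvalue m \<beta> lam \<longleftrightarrow> (\<exists>u. eigenfunction m \<beta> lam u)"

definition principal_eigenvalue :: "nat \<Rightarrow> real \<Rightarrow> real \<Rightarrow> bool" where
  "principal_eigenvalue m \<beta> lam \<longleftrightarrow>
     lam > 0 \<and> (\<exists>u. eigenfunction m \<beta> lam u \<and> (\<forall>x\<in>tree m. u x \<ge> 0))"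

end

theory Submission
  imports Defs
begin

lemma tree_snoc: "x \<in> tree m \<Longrightarrow> i < m \<Longrightarrow> x @ [i] \<in> tree m"
  by (auto simp: tree_def)

lemma delta0: "Delta m 0 u x = (1 / real m) * (\<Sum>i<m. u (x @ [i])) - u x"
  by (simp add: Delta_def p_beta_def)

lemma eig_ok:
  assumes m: "m \<ge> 2" and l: "l \<in> {0<..1::real}"
  shows "eigenfunction m 0 l (\<lambda>x. (1 - l) ^ length x)"
proof -
  have a0: "0 \<le> 1 - l" "1 - l < 1" using l by auto
  have bd: "\<forall>x\<in>tree m. \<bar>(1 - l) ^ length x\<bar> \<le> 1"
    using a0 by (simp add: power_le_one)
  have nz: "\<exists>x\<in>tree m. (1 - l) ^ length x \<noteq> 0"
    by (rule bexI[of _ "[]"]) (auto simp: tree_def)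
  have eq: "\<forall>x\<in>tree m. - Delta m 0 (\<lambda>x. (1 - l) ^ length x) x = l * (1 - l) ^ length x"
  proof
    fix x :: "nat list"
    have "(\<Sum>i<m. (1 - l) ^ length (x @ [i])) = real m * (1 - l) ^ Suc (length x)"
      by simp
    then show "- Delta m 0 (\<lambda>x. (1 - l) ^ length x) x = l * (1 - l) ^ length x"
      using m by (simp add: delta0 algebra_simps)
  qed
  have lim: "\<forall>X. branch m X \<longrightarrow> (\<lambda>n. (1 - l) ^ length (X n)) \<longlonglongrightarrow> 0"
  proof (intro allI impI)
    fix X assume b: "branch m X"
    have "length (X n) = n" for n
      using b by (induction n) (auto simp: branch_def, metis length_append_singleton)
    then show "(\<lambda>n. (1 - l) ^ length (X n)) \<longlonglongrightarrow> 0"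
      using a0 by (simp add: LIMSEQ_realpow_zero)
  qed
  show ?thesis unfolding eigenfunction_def using bd nz eq lim by blast
qed

theorem theorem1p1:
  fixes m :: nat and lam :: real
  assumes "m \<ge> 2"
  shows "(principal_eigenvalue m 0 lam \<longleftrightarrow> lam \<in> {0<..1}) \<and>
         (\<forall>l\<in>{0<..1::real}. eigenfunction m 0 l (\<lambda>x. (1 - l) ^ length x))"
proof -
  have A: "\<forall>l\<in>{0<..1::real}. eigenfunction m 0 l (\<lambda>x. (1 - l) ^ length x)"
    using eig_ok assms by blast
  have B: "lam \<le> 1" if p: "principal_eigenvalue m 0 lam"
  proof (rule ccontr)
    assume gt: "\<not> lam \<le> 1"
    obtain u where e: "eigenfunction m 0 lam u" and nn: "\<forall>x\<in>tree m. u x \<ge> 0"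
      using p unfolding principal_eigenvalue_def by blast
    have z: "u x = 0" if x: "x \<in> tree m" for x
    proof -
      have "- Delta m 0 u x = lam * u x" using e x unfolding eigenfunction_def by blast
      then have h: "(1 / real m) * (\<Sum>i<m. u (x @ [i])) = (1 - lam) * u x"
        by (simp add: delta0 algebra_simps)
      have "0 \<le> (\<Sum>i<m. u (x @ [i]))"
        by (rule sum_nonneg) (use nn tree_snoc x in blast)
      then have "0 \<le> (1 / real m) * (\<Sum>i<m. u (x @ [i]))" by simp
      then have "0 \<le> (1 - lam) * u x" using h by linarith
      moreover have "u x \<ge> 0" using nn x by blast
      ultimately show ?thesis using gt by (smt (verit) mult_neg_pos)
    qed
    then show False using e unfolding eigenfunction_def by blast
  qed
  have C: "principal_eigenvalue m 0 lam" if l: "lam \<in> {0<..1}"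
    unfolding principal_eigenvalue_def
    using l A by (auto intro!: exI[of _ "\<lambda>x. (1 - lam) ^ length x"])
  show ?thesis using A B C principal_eigenvalue_def by auto
qed

end
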